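(* Let $S\subseteq BS^{+}(1,3)$ be a finite set of size $k$ with coset decomposition $S=S_0\cup S_1\cup\cdots\cup S_t$, where $t\geq 2$. If $k_0=|S_0|\geq 2$ and $k_i=|S_i|=1$ for all $1\le i\le t$, then $|S^2|\geq \tfrac{7}{2}k-6$.
   Context: $BS(1,3)=\langle a,b\mid ab=ba^3\rangle$; $BS^{+}(1,3)=\{b^m a^x: m\in\mathbb{Z}_{\ge 0},\ x\in\mathbb{Z}\}$, with $(b^m a^x)(b^n a^y)=b^{m+n}a^{y+3^n x}$. $S^2=\{st: s,t\in S\}$. Coset decomposition: for a finite nonempty $S\subseteq BS^{+}(1,3)$, let $m_0<m_1<\cdots<m_t$ be the distinct integers $m\ge 0$ with $S\cap b^m a^{\mathbb Z}\neq\emptyset$; put $S_i=S\cap b^{m_i}a^{\mathbb Z}=b^{m_i}a^{A_i}$ with $A_i\subseteq\mathbb Z$ finite, and $k_i=|S_i|$. *)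

theory Defs
  imports Complex_Main
begin

text \<open>Elements of BS+(1,3): the pair (m, x) represents b^m a^x, m \<ge> 0, x integer.\<close>
type_synonym bsp = "nat \<times> int"

definition bs_mult :: "bsp \<Rightarrow> bsp \<Rightarrow> bsp" where
  "bs_mult p q = (fst p + fst q, snd q + 3 ^ (fst q) * snd p)"

definition square_set :: "bsp set \<Rightarrow> bsp set" where
  "square_set S = {bs_mult s t | s t. s \<in> S \<and> t \<in> S}"

definition levels :: "bsp set \<Rightarrow> nat set" where
  "levels S = fst ` S"

definition coset_part :: "bsp set \<Rightarrow> nat \<Rightarrow> bsp set" where
  "coset_part S m = {s \<in> S. fst s = m}"

end

theory Submission imports Defs begin

lemma sumdil:
  fixes A :: "int set" and l :: int
  assumes "finite A" "A \<noteq> {}" "l > 0"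
  shows "card ((\<lambda>(a,b). b + l*a) ` (A \<times> A)) \<ge> 2 * card A - 1"
proof -
  define amin where "amin = Min A"
  define amax where "amax = Max A"
  have mn: "\<And>a. a \<in> A \<Longrightarrow> amin \<le> a" using assms amin_def by auto
  have mx: "\<And>a. a \<in> A \<Longrightarrow> a \<le> amax" using assms amax_def by auto
  have inA: "amin \<in> A" "amax \<in> A" using assms amin_def amax_def by auto
  define X where "X = (\<lambda>b. b + l*amin) ` A"
  define Y where "Y = (\<lambda>a. amax + l*a) ` A"
  have cX: "card X = card A" unfolding X_def by (rule card_image) (simp add: inj_on_def)
  have cY: "card Y = card A" unfolding Y_def by (rule card_image) (use assms in \<open>simp add: inj_on_def\<close>)
  have sub: "X \<union> Y \<subseteq> (\<lambda>(a,b). b + l*a) ` (A \<times> A)"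
    unfolding X_def Y_def using inA by (auto simp: image_iff intro!: bexI[of _ "(amin, _)"] bexI[of _ "(_, amax)"])
  have int: "X \<inter> Y \<subseteq> {amax + l*amin}"
  proof
    fix z assume "z \<in> X \<inter> Y"
    then have "z \<in> X" "z \<in> Y" by auto
    then obtain b a where b: "b \<in> A" "z = b + l*amin" and a: "a \<in> A" "z = amax + l*a"
      unfolding X_def Y_def by blast
    have "l*amin \<le> l*a" using mn[OF a(1)] assms(3) by simp
    moreover have "b \<le> amax" using mx[OF b(1)] .
    ultimately have "b = amax" "l*amin = l*a" using a b by linarith+
    then show "z \<in> {amax + l*amin}" using b by simp
  qed
  have "card (X \<inter> Y) \<le> 1" using card_mono[OF _ int] by simp
  moreover have "card X + card Y = card (X \<union> Y) + card (X \<inter> Y)"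
    by (rule card_Un_Int) (auto simp: X_def Y_def assms)
  moreover have "card (X \<union> Y) \<le> card ((\<lambda>(a,b). b + l*a) ` (A \<times> A))"
    by (rule card_mono[OF _ sub]) (simp add: assms)
  ultimately show ?thesis using cX cY by linarith
qed

lemma twodil:
  fixes A :: "int set" and l c d :: int
  assumes "finite A" "card A \<ge> 2" "l > 1"
  shows "card ((\<lambda>a. c + l*a) ` A \<union> (\<lambda>a. d + a) ` A) \<ge> card A + 1"
proof (rule ccontr)
  assume neg: "\<not> ?thesis"
  have ne: "A \<noteq> {}" using assms by auto
  define X where "X = (\<lambda>a. c + l*a) ` A"
  define Y where "Y = (\<lambda>a. d + a) ` A"
  have cX: "card X = card A" unfolding X_def by (rule card_image) (use assms in \<open>simp add: inj_on_def\<close>)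
  have cY: "card Y = card A" unfolding Y_def by (rule card_image) (simp add: inj_on_def)
  have fin: "finite (X \<union> Y)" using assms X_def Y_def by auto
  have "card (X \<union> Y) \<le> card A" using neg X_def Y_def by simp
  moreover have "card X \<le> card (X \<union> Y)" "card Y \<le> card (X \<union> Y)"
    by (rule card_mono[OF fin], blast)+
  ultimately have e1: "card X = card (X \<union> Y)" "card Y = card (X \<union> Y)" using cX cY by linarith+
  have "X = X \<union> Y" by (rule card_subset_eq[OF fin _ e1(1)]) blast
  moreover have "Y = X \<union> Y" by (rule card_subset_eq[OF fin _ e1(2)]) blast
  ultimately have XY: "X = Y" by simp
  define amin where "amin = Min A"
  define amax where "amax = Max A"
  have mn: "\<And>a. a \<in> A \<Longrightarrow> amin \<le> a" using assms amin_def by auto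
  have mx: "\<And>a. a \<in> A \<Longrightarrow> a \<le> amax" using assms amax_def by auto
  have inA: "amin \<in> A" "amax \<in> A" using assms ne amin_def amax_def by auto
  have lt: "amin < amax"
  proof (rule ccontr)
    assume "\<not> amin < amax"
    hence "A \<subseteq> {amin}" using mn mx by force
    hence "card A \<le> 1" using card_mono[of "{amin}" A] by simp
    thus False using assms by simp
  qed
  have "d + amax \<in> X" using XY inA Y_def by auto
  then obtain a1 where a1: "a1 \<in> A" "d + amax = c + l*a1" using X_def by auto
  have "c + l*amax \<in> Y" using XY inA X_def by auto
  then obtain a2 where a2: "a2 \<in> A" "c + l*amax = d + a2" using Y_def by auto
  have "d + amin \<in> X" using XY inA Y_def by auto
  then obtain a3 where a3: "a3 \<in> A" "d + amin = c + l*a3" using X_def by auto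
  have "c + l*amin \<in> Y" using XY inA X_def by auto
  then obtain a4 where a4: "a4 \<in> A" "c + l*amin = d + a4" using Y_def by auto
  have "l*a1 \<le> l*amax" using mx[OF a1(1)] assms by simp
  have "l*amin \<le> l*a3" using mn[OF a3(1)] assms by simp
  have "a2 \<le> amax" "amin \<le> a4" using mx[OF a2(1)] mn[OF a4(1)] .
  have e: "amax - amin = l*amax - l*amin"
    using \<open>l*a1 \<le> l*amax\<close> \<open>l*amin \<le> l*a3\<close> \<open>a2 \<le> amax\<close> \<open>amin \<le> a4\<close> a1 a2 a3 a4 by linarith
  have "l*(amax - amin) > 1*(amax - amin)"
    using lt assms by (intro mult_strict_right_mono) auto
  moreover have "l*(amax - amin) = amax - amin" using e by (metis right_diff_distrib)
  ultimately show False by simp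
qed

lemma sq_mem: "s \<in> S \<Longrightarrow> u \<in> S \<Longrightarrow> bs_mult s u \<in> square_set S"
  unfolding square_set_def by blast

theorem lemma2p2:
  fixes S :: "bsp set" and t :: nat
  assumes "finite S"
    and "card (levels S) = t + 1"
    and "t \<ge> 2"
    and "card (coset_part S (Min (levels S))) \<ge> 2"
    and "\<forall>m \<in> levels S. m \<noteq> Min (levels S) \<longrightarrow> card (coset_part S m) = 1"
  shows "real (card (square_set S)) \<ge> 7/2 * real (card S) - 6"
proof -
  define L where "L = levels S"
  define m0 where "m0 = Min L"
  define L' where "L' = L - {m0}"
  have finL: "finite L" using assms(1) L_def levels_def by simp
  have Lne: "L \<noteq> {}" using assms(2) L_def by auto
  have m0L: "m0 \<in> L" using finL Lne m0_def by simp
  have cL': "card L' = t" using assms(2) L_def L'_def m0L finL by simp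
  have finL': "finite L'" using finL L'_def by simp
  have m0lt: "\<And>m. m \<in> L' \<Longrightarrow> m0 < m"
    using finL m0_def L'_def by (metis DiffE Min_le le_neq_implies_less singletonI)
  define A where "A = snd ` coset_part S m0"
  have finC: "\<And>m. finite (coset_part S m)" using assms(1) coset_part_def by simp
  have cA: "card A = card (coset_part S m0)"
    unfolding A_def by (rule card_image) (auto simp: inj_on_def coset_part_def prod_eq_iff)
  have finA: "finite A" using A_def finC by simp
  have A2: "card A \<ge> 2" using cA assms(4) m0_def L_def by simp
  have Ane: "A \<noteq> {}" using A2 by auto
  have Amem: "\<And>a. a \<in> A \<Longrightarrow> (m0, a) \<in> S"
    unfolding A_def coset_part_def by auto
  have single: "\<forall>m \<in> L'. \<exists>x. coset_part S m = {(m, x)}"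
  proof
    fix m assume m: "m \<in> L'"
    have "card (coset_part S m) = 1" using assms(5) m L'_def L_def m0_def by simp
    then obtain p where p: "coset_part S m = {p}" by (rule card_1_singletonE)
    hence "fst p = m" unfolding coset_part_def by auto
    thus "\<exists>x. coset_part S m = {(m, x)}" using p by (metis prod.collapse)
  qed
  then obtain xf where xf: "\<And>m. m \<in> L' \<Longrightarrow> coset_part S m = {(m, xf m)}" by metis
  have xfS: "\<And>m. m \<in> L' \<Longrightarrow> (m, xf m) \<in> S" using xf unfolding coset_part_def by blast
  have Sdec: "S = (\<Union>m\<in>L. coset_part S m)"
    unfolding L_def levels_def coset_part_def by auto
  have "card S = (\<Sum>m\<in>L. card (coset_part S m))"
    by (subst Sdec, rule card_UN_disjoint) (use finC in \<open>auto simp: finL coset_part_def\<close>)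
  also have "\<dots> = card (coset_part S m0) + (\<Sum>m\<in>L'. card (coset_part S m))"
    using finL m0L L'_def by (simp add: sum.remove)
  also have "(\<Sum>m\<in>L'. card (coset_part S m)) = (\<Sum>m\<in>L'. 1)"
    by (rule sum.cong) (auto simp: xf)
  finally have cS: "card S = card A + t" using cA cL' by simp
  define M where "M = Max L"
  have HM: "M \<in> L" using finL Lne M_def by simp
  have leM: "\<And>m. m \<in> L \<Longrightarrow> m \<le> M" using finL M_def by simp
  have HM': "M \<in> L'"
  proof (rule ccontr)
    assume "M \<notin> L'"
    hence "M = m0" using HM L'_def by auto
    hence "L' = {}" using m0lt leM L'_def by force
    thus False using cL' assms(3) by simp
  qed
  define Q where "Q = square_set S"
  have finQ: "finite Q"
  proof -
    have "Q = (\<lambda>(s,u). bs_mult s u) ` (S \<times> S)" unfolding Q_def square_set_def by auto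
    thus ?thesis using assms(1) by simp
  qed
  define P1 where "P1 = Q \<inter> {p. fst p = 2*m0}"
  define P2 where "P2 = Q \<inter> {p. 2*m0 < fst p \<and> fst p \<le> m0 + M}"
  define P3 where "P3 = Q \<inter> {p. m0 + M < fst p}"
  have "card (P1 \<union> P2 \<union> P3) = card P1 + card P2 + card P3"
  proof -
    have f: "finite P1" "finite P2" "finite P3" using finQ P1_def P2_def P3_def by auto
    have "P1 \<inter> P2 = {}" "(P1 \<union> P2) \<inter> P3 = {}" using leM[OF m0L] unfolding P1_def P2_def P3_def by auto
    thus ?thesis using f card_Un_disjoint by (simp add: card_Un_disjoint)
  qed
  moreover have "card (P1 \<union> P2 \<union> P3) \<le> card Q"
    by (rule card_mono[OF finQ]) (auto simp: P1_def P2_def P3_def)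
  ultimately have cQ: "card Q \<ge> card P1 + card P2 + card P3" by linarith
  have "Pair (2*m0) ` ((\<lambda>(a,b). b + 3^m0*a) ` (A \<times> A)) \<subseteq> P1"
  proof
    fix p assume "p \<in> Pair (2*m0) ` ((\<lambda>(a,b). b + 3^m0*a) ` (A \<times> A))"
    then obtain a b where ab: "a \<in> A" "b \<in> A" "p = (2*m0, b + 3^m0*a)" by auto
    have "bs_mult (m0,a) (m0,b) \<in> Q" unfolding Q_def using Amem ab by (intro sq_mem)
    thus "p \<in> P1" using ab unfolding P1_def bs_mult_def by (simp add: mult_2)
  qed
  hence "card (Pair (2*m0) ` ((\<lambda>(a,b). b + 3^m0*a) ` (A \<times> A))) \<le> card P1"
    using finQ P1_def by (intro card_mono) auto
  hence c1: "card P1 \<ge> 2 * card A - 1"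
    using sumdil[OF finA Ane, of "3^m0"] by (simp add: card_image inj_on_def)
  define W where "W = (\<lambda>m. Pair (m0+m) ` ((\<lambda>a. xf m + 3^m*a) ` A \<union> (\<lambda>a. 3^m0 * xf m + a) ` A))"
  have Wsub: "(\<Union>m\<in>L'. W m) \<subseteq> P2"
  proof
    fix p assume "p \<in> (\<Union>m\<in>L'. W m)"
    then obtain m a where m: "m \<in> L'" and a: "a \<in> A" and
      p: "p = (m0+m, xf m + 3^m*a) \<or> p = (m0+m, 3^m0 * xf m + a)"
      unfolding W_def by blast
    have "bs_mult (m0,a) (m, xf m) \<in> Q" "bs_mult (m, xf m) (m0,a) \<in> Q"
      unfolding Q_def using Amem a xfS m by (auto intro: sq_mem)
    moreover have "2*m0 < m0+m" "m0 + m \<le> m0 + M" using m0lt[OF m] leM m L'_def by auto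
    ultimately show "p \<in> P2" using p unfolding P2_def bs_mult_def by (auto simp: add.commute mult.commute)
  qed
  have "card (\<Union>m\<in>L'. W m) = (\<Sum>m\<in>L'. card (W m))"
    by (rule card_UN_disjoint) (auto simp: finL' W_def finA)
  also have "\<dots> \<ge> card L' * (card A + 1)"
  proof -
    have "\<And>m. m \<in> L' \<Longrightarrow> card A + 1 \<le> card (W m)"
    proof -
      fix m assume m: "m \<in> L'"
      have "(3::int) ^ 0 < 3 ^ m" using m0lt[OF m] by (intro power_strict_increasing) auto
      hence "(1::int) < 3^m" by simp
      have "card (W m) = card ((\<lambda>a. xf m + 3^m*a) ` A \<union> (\<lambda>a. 3^m0 * xf m + a) ` A)"
        unfolding W_def by (rule card_image) (simp add: inj_on_def)
      thus "card A + 1 \<le> card (W m)"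
        using twodil[OF finA A2 \<open>(1::int) < 3^m\<close>] by simp
    qed
    from sum_bounded_below[of L' "card A + 1" "\<lambda>m. card (W m)", OF this] show ?thesis by simp
  qed
  finally have "card (\<Union>m\<in>L'. W m) \<ge> t * (card A + 1)" using cL' by simp
  moreover have "card (\<Union>m\<in>L'. W m) \<le> card P2"
    using Wsub finQ P2_def by (intro card_mono) auto
  ultimately have c2: "card P2 \<ge> t * (card A + 1)" by linarith
  have "(\<lambda>m. bs_mult (m, xf m) (M, xf M)) ` L' \<subseteq> P3"
  proof
    fix p assume "p \<in> (\<lambda>m. bs_mult (m, xf m) (M, xf M)) ` L'"
    then obtain m where m: "m \<in> L'" "p = bs_mult (m, xf m) (M, xf M)" by auto
    have "p \<in> Q" unfolding Q_def m(2) using xfS m HM' by (intro sq_mem)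
    thus "p \<in> P3" using m m0lt[OF m(1)] unfolding P3_def bs_mult_def by simp
  qed
  moreover have "card ((\<lambda>m. bs_mult (m, xf m) (M, xf M)) ` L') = card L'"
    by (rule card_image) (auto simp: inj_on_def bs_mult_def)
  ultimately have c3: "card P3 \<ge> t"
    using cL' finQ P3_def card_mono[of P3] by (metis finite_Int)
  have "card Q + 1 \<ge> 2 * card A + t * (card A + 1) + t" using cQ c1 c2 c3 A2 by linarith
  hence "real (card Q + 1) \<ge> real (2 * card A + t * (card A + 1) + t)" by linarith
  hence rQ: "real (card Q) \<ge> 2 * real (card A) - 1 + real t * (real (card A) + 1) + real t"
    by (simp add: algebra_simps)
  have "(real t - 2) * (real (card A) - 2) \<ge> 0" using A2 assms(3) by simp
  thus ?thesis using rQ cS Q_def by (simp add: algebra_simps)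
qed

end
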